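(* Let $\lambda=(\lambda_1,\lambda_2,\lambda_3)\in\mathbb C^3$ and let $\pi$ be a representation of $\mathrm U_q(\mathfrak{gl}_3)$ on a space $W$ generated by a vector $v_0$ with $q^{\nu G_i}v_0=q^{\nu\lambda_i}v_0$ for all $\nu\in\mathbb C$, $i=1,2,3$, and $E_1v_0=E_2v_0=0$. Then $C^{(1)},C^{(2)},C^{(3)}$ act on $W$ as scalars and, as polynomials in a formal variable $\zeta$, $$\pi\bigl(1-C^{(1)}\zeta-C^{(2)}\zeta^2-C^{(3)}\zeta^3\bigr)=(1-q^{-2(\lambda_1+1)}\zeta)(1-q^{-2\lambda_2}\zeta)(1-q^{-2(\lambda_3-1)}\zeta).$$ Consequently, if $F_k$ ($k\ge1$) are defined by $\sum_{k\ge1}F_k\zeta^k/k=-\log(1-C^{(1)}\zeta-C^{(2)}\zeta^2-C^{(3)}\zeta^3)$ and $F(\zeta)=\sum_{k\ge1}\frac{F_k}{q^{2k}+1+q^{-2k}}\frac{\zeta^k}{k}$ (assuming $q^{2k}+1+q^{-2k}\ne0$ for all $k\ge1$), then $\pi(F_k)=q^{-2(\lambda_1+1)k}+q^{-2\lambda_2k}+q^{-2(\lambda_3-1)k}$ and $$\pi(F(\zeta))=f_3(q^{-2(\lambda_1+1)}\zeta)+f_3(q^{-2\lambda_2}\zeta)+f_3(q^{-2(\lambda_3-1)}\zeta),\qquad f_3(\zeta)=\sum_{k\ge1}\frac{1}{q^{2k}+1+q^{-2k}}\frac{\zeta^k}{k}.$$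
   Context: Setting: $\hbar\in\mathbb C$, $q=e^\hbar$, $q^2\neq1$, $\kappa_q=q-q^{-1}$, $[\nu]_q=(q^\nu-q^{-\nu})/\kappa_q$. Let $\mathfrak g=\mathbb CG_1\oplus\mathbb CG_2\oplus\mathbb CG_3$ and define linear forms $\alpha_1,\alpha_2$ on $\mathfrak g$ by $\alpha_1(G_1)=1,\alpha_1(G_2)=-1,\alpha_1(G_3)=0$, $\alpha_2(G_1)=0,\alpha_2(G_2)=1,\alpha_2(G_3)=-1$; put $H_1=G_1-G_2$, $H_2=G_2-G_3$. $\mathrm U_q(\mathfrak{gl}_3)$ is the unital associative $\mathbb C$-algebra generated by $E_1,E_2,F_1,F_2$ and symbols $q^X$, $X\in\mathfrak g$, with relations $q^0=1$, $q^{X_1}q^{X_2}=q^{X_1+X_2}$, $q^XE_iq^{-X}=q^{\alpha_i(X)}E_i$, $q^XF_iq^{-X}=q^{-\alpha_i(X)}F_i$, $[E_i,F_j]=\delta_{ij}(q^{H_i}-q^{-H_i})/\kappa_q$, and for $i\ne j$ the $q$-Serre relations $E_i^2E_j-[2]_qE_iE_jE_i+E_jE_i^2=0$, $F_i^2F_j-[2]_qF_iF_jF_i+F_jF_i^2=0$. For $\nu\in\mathbb C$ one writes $q^{X+\nu}=q^\nu q^X$. Further $E_3=E_1E_2-q^{-1}E_2E_1$, $F_3=F_2F_1-qF_1F_2$, and $C^{(1)}=q^{-2G_1-2}+q^{-2G_2}+q^{-2G_3+2}+\kappa_q^2F_1E_1q^{-G_1-G_2-1}+\kappa_q^2F_2E_2q^{-G_2-G_3+1}+\kappa_q^2F_3E_3q^{-G_1-G_3+1}-\kappa_q^3F_3E_1E_2q^{-G_1-G_3}$,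 $C^{(2)}=-q^{-2G_1-2G_2-2}-q^{-2G_1-2G_3}-q^{-2G_2-2G_3+2}-\kappa_q^2F_1E_1q^{-G_1-G_2-2G_3+1}-\kappa_q^2F_2E_2q^{-2G_1-G_2-G_3-1}-\kappa_q^2F_3E_3q^{-G_1-2G_2-G_3+1}-\kappa_q^3F_1F_2E_3q^{-G_1-2G_2-G_3+1}$, $C^{(3)}=q^{-2(G_1+G_2+G_3)}$. *)

theory Defs
  imports Complex_Main "HOL-Computational_Algebra.Polynomial" "HOL-Computational_Algebra.Formal_Power_Series"
begin

text \<open>Conventions.  q^nu = exp (hbar * nu) for nu complex.  An element
  X = x1 G1 + x2 G2 + x3 G3 of the Cartan algebra g is encoded by its coordinates
  (x1, x2, x3); the operator K x1 x2 x3 is the image of the generator q^X.\<close>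

definition qp :: "complex \<Rightarrow> complex \<Rightarrow> complex" where
  "qp hbar nu = exp (hbar * nu)"

definition kappa :: "complex \<Rightarrow> complex" where
  "kappa hbar = qp hbar 1 - qp hbar (-1)"

definition qint :: "complex \<Rightarrow> complex \<Rightarrow> complex" where
  "qint hbar nu = (qp hbar nu - qp hbar (-nu)) / kappa hbar"

definition alpha :: "nat \<Rightarrow> complex \<Rightarrow> complex \<Rightarrow> complex \<Rightarrow> complex" where
  "alpha i x1 x2 x3 = (if i = 1 then x1 - x2 else x2 - x3)"

definition is_Uq_gl3_rep ::
  "complex \<Rightarrow> (complex \<Rightarrow> 'w::ab_group_add \<Rightarrow> 'w) \<Rightarrow> (nat \<Rightarrow> 'w \<Rightarrow> 'w) \<Rightarrow> (nat \<Rightarrow> 'w \<Rightarrow> 'w)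
    \<Rightarrow> (complex \<Rightarrow> complex \<Rightarrow> complex \<Rightarrow> 'w \<Rightarrow> 'w) \<Rightarrow> bool" where
  "is_Uq_gl3_rep hbar smul E F K \<longleftrightarrow>
     vector_space smul \<and>
     (\<forall>i\<in>{1,2}. Vector_Spaces.linear smul smul (E i) \<and> Vector_Spaces.linear smul smul (F i)) \<and>
     (\<forall>x1 x2 x3. Vector_Spaces.linear smul smul (K x1 x2 x3)) \<and>
     K 0 0 0 = id \<and>
     (\<forall>x1 x2 x3 y1 y2 y3. K x1 x2 x3 \<circ> K y1 y2 y3 = K (x1+y1) (x2+y2) (x3+y3)) \<and>
     (\<forall>i\<in>{1,2}. \<forall>x1 x2 x3 w.
        K x1 x2 x3 (E i (K (-x1) (-x2) (-x3) w)) = smul (qp hbar (alpha i x1 x2 x3)) (E i w)) \<and>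
     (\<forall>i\<in>{1,2}. \<forall>x1 x2 x3 w.
        K x1 x2 x3 (F i (K (-x1) (-x2) (-x3) w)) = smul (qp hbar (- alpha i x1 x2 x3)) (F i w)) \<and>
     (\<forall>w. E 1 (F 1 w) - F 1 (E 1 w) = smul (1 / kappa hbar) (K 1 (-1) 0 w - K (-1) 1 0 w)) \<and>
     (\<forall>w. E 2 (F 2 w) - F 2 (E 2 w) = smul (1 / kappa hbar) (K 0 1 (-1) w - K 0 (-1) 1 w)) \<and>
     (\<forall>w. E 1 (F 2 w) - F 2 (E 1 w) = 0) \<and>
     (\<forall>w. E 2 (F 1 w) - F 1 (E 2 w) = 0) \<and>
     (\<forall>i\<in>{1,2}. \<forall>j\<in>{1,2}. i \<noteq> j \<longrightarrow> (\<forall>w.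
        E i (E i (E j w)) - smul (qint hbar 2) (E i (E j (E i w))) + E j (E i (E i w)) = 0 \<and>
        F i (F i (F j w)) - smul (qint hbar 2) (F i (F j (F i w))) + F j (F i (F i w)) = 0))"

definition generated_by ::
  "(complex \<Rightarrow> 'w::ab_group_add \<Rightarrow> 'w) \<Rightarrow> (nat \<Rightarrow> 'w \<Rightarrow> 'w) \<Rightarrow> (nat \<Rightarrow> 'w \<Rightarrow> 'w)
    \<Rightarrow> (complex \<Rightarrow> complex \<Rightarrow> complex \<Rightarrow> 'w \<Rightarrow> 'w) \<Rightarrow> 'w \<Rightarrow> bool" where
  "generated_by smul E F K v0 \<longleftrightarrow>
     (\<forall>S. module.subspace smul S \<and> v0 \<in> S \<and>
          (\<forall>i\<in>{1,2}. E i ` S \<subseteq> S \<and> F i ` S \<subseteq> S) \<and>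
          (\<forall>x1 x2 x3. K x1 x2 x3 ` S \<subseteq> S) \<longrightarrow> S = UNIV)"

definition E3op where
  "E3op hbar smul E = (\<lambda>w. E 1 (E 2 w) - smul (qp hbar (-1)) (E 2 (E 1 w)))"

definition F3op where
  "F3op hbar smul F = (\<lambda>w. F 2 (F 1 w) - smul (qp hbar 1) (F 1 (F 2 w)))"

text \<open>q^(X + nu) = q^nu q^X.\<close>
definition Kc where
  "Kc hbar smul K x1 x2 x3 nu = (\<lambda>w. smul (qp hbar nu) (K x1 x2 x3 w))"

definition C1op where
  "C1op hbar smul E F K = (\<lambda>w. let k = kappa hbar; E3 = E3op hbar smul E; F3 = F3op hbar smul F in
      Kc hbar smul K (-2) 0 0 (-2) w + K 0 (-2) 0 w + Kc hbar smul K 0 0 (-2) 2 w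
    + smul (k^2) (F 1 (E 1 (Kc hbar smul K (-1) (-1) 0 (-1) w)))
    + smul (k^2) (F 2 (E 2 (Kc hbar smul K 0 (-1) (-1) 1 w)))
    + smul (k^2) (F3 (E3 (Kc hbar smul K (-1) 0 (-1) 1 w)))
    - smul (k^3) (F3 (E 1 (E 2 (K (-1) 0 (-1) w)))))"

definition C2op where
  "C2op hbar smul E F K = (\<lambda>w. let k = kappa hbar; E3 = E3op hbar smul E; F3 = F3op hbar smul F in
    - Kc hbar smul K (-2) (-2) 0 (-2) w - K (-2) 0 (-2) w - Kc hbar smul K 0 (-2) (-2) 2 w
    - smul (k^2) (F 1 (E 1 (Kc hbar smul K (-1) (-1) (-2) 1 w)))
    - smul (k^2) (F 2 (E 2 (Kc hbar smul K (-2) (-1) (-1) (-1) w)))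
    - smul (k^2) (F3 (E3 (Kc hbar smul K (-1) (-2) (-1) 1 w)))
    - smul (k^3) (F 1 (F 2 (E3 (Kc hbar smul K (-1) (-2) (-1) 1 w)))))"

definition C3op where
  "C3op K = K (-2) (-2) (-2)"

text \<open>The formal power series -log(1 - c1 z - c2 z^2 - c3 z^3); fps_ln 1 = log(1+z).\<close>
definition neglog_series :: "complex \<Rightarrow> complex \<Rightarrow> complex \<Rightarrow> complex fps" where
  "neglog_series c1 c2 c3 =
     - (fps_ln 1 oo (- (fps_const c1 * fps_X + fps_const c2 * fps_X^2 + fps_const c3 * fps_X^3)))"

text \<open>F_k defined by sum_{k>=1} F_k z^k / k = -log(1 - C1 z - C2 z^2 - C3 z^3),
  evaluated at scalar values c1, c2, c3 of the Casimirs.\<close>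
definition Fk :: "complex \<Rightarrow> complex \<Rightarrow> complex \<Rightarrow> nat \<Rightarrow> complex" where
  "Fk c1 c2 c3 k = of_nat k * fps_nth (neglog_series c1 c2 c3) k"

definition Fseries :: "complex \<Rightarrow> complex \<Rightarrow> complex \<Rightarrow> complex \<Rightarrow> complex fps" where
  "Fseries hbar c1 c2 c3 = Abs_fps (\<lambda>k. if k = 0 then 0 else
      Fk c1 c2 c3 k / (qp hbar (2 * of_nat k) + 1 + qp hbar (- 2 * of_nat k)) / of_nat k)"

definition f3 :: "complex \<Rightarrow> complex fps" where
  "f3 hbar = Abs_fps (\<lambda>k. if k = 0 then 0 else
      1 / (qp hbar (2 * of_nat k) + 1 + qp hbar (- 2 * of_nat k)) / of_nat k)"

definition fps_scale :: "complex \<Rightarrow> complex fps \<Rightarrow> complex fps" where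
  "fps_scale a f = f oo (fps_const a * fps_X)"

end

theory Submission
  imports Defs
begin

declare One_nat_def [simp del]

datatype letter = LE nat | LF nat | LE3 | LF3 | LK complex complex complex

definition csum :: "(complex \<times> letter list) list \<Rightarrow> letter list \<Rightarrow> complex" where
  "csum l u = sum_list (map fst (filter (\<lambda>p. snd p = u) l))"

locale uqrep =
  fixes hbar :: complex and smul :: "complex \<Rightarrow> 'w::ab_group_add \<Rightarrow> 'w"
    and E F :: "nat \<Rightarrow> 'w \<Rightarrow> 'w" and K :: "complex \<Rightarrow> complex \<Rightarrow> complex \<Rightarrow> 'w \<Rightarrow> 'w"
  assumes rep: "is_Uq_gl3_rep hbar smul E F K" and q2: "qp hbar 1 ^ 2 \<noteq> 1"
begin

lemmas P_vs = rep[unfolded is_Uq_gl3_rep_def, THEN conjunct1]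
lemmas P_linEF = rep[unfolded is_Uq_gl3_rep_def, THEN conjunct2, THEN conjunct1]
lemmas P_linK = rep[unfolded is_Uq_gl3_rep_def, THEN conjunct2, THEN conjunct2, THEN conjunct1]
lemmas P_K0 = rep[unfolded is_Uq_gl3_rep_def, THEN conjunct2, THEN conjunct2, THEN conjunct2, THEN conjunct1]
lemmas P_KK = rep[unfolded is_Uq_gl3_rep_def, THEN conjunct2, THEN conjunct2, THEN conjunct2, THEN conjunct2, THEN conjunct1]
lemmas P_KE = rep[unfolded is_Uq_gl3_rep_def, THEN conjunct2, THEN conjunct2, THEN conjunct2, THEN conjunct2, THEN conjunct2, THEN conjunct1]
lemmas P_KF = rep[unfolded is_Uq_gl3_rep_def, THEN conjunct2, THEN conjunct2, THEN conjunct2, THEN conjunct2, THEN conjunct2, THEN conjunct2, THEN conjunct1]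
lemmas P_EF11 = rep[unfolded is_Uq_gl3_rep_def, THEN conjunct2, THEN conjunct2, THEN conjunct2, THEN conjunct2, THEN conjunct2, THEN conjunct2, THEN conjunct2, THEN conjunct1]
lemmas P_EF22 = rep[unfolded is_Uq_gl3_rep_def, THEN conjunct2, THEN conjunct2, THEN conjunct2, THEN conjunct2, THEN conjunct2, THEN conjunct2, THEN conjunct2, THEN conjunct2, THEN conjunct1]
lemmas P_EF12 = rep[unfolded is_Uq_gl3_rep_def, THEN conjunct2, THEN conjunct2, THEN conjunct2, THEN conjunct2, THEN conjunct2, THEN conjunct2, THEN conjunct2, THEN conjunct2, THEN conjunct2, THEN conjunct1]
lemmas P_EF21 = rep[unfolded is_Uq_gl3_rep_def, THEN conjunct2, THEN conjunct2, THEN conjunct2, THEN conjunct2, THEN conjunct2, THEN conjunct2, THEN conjunct2, THEN conjunct2, THEN conjunct2, THEN conjunct2, THEN conjunct1]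
lemmas P_serre = rep[unfolded is_Uq_gl3_rep_def, THEN conjunct2, THEN conjunct2, THEN conjunct2, THEN conjunct2, THEN conjunct2, THEN conjunct2, THEN conjunct2, THEN conjunct2, THEN conjunct2, THEN conjunct2, THEN conjunct2]

sublocale vs: vector_space smul by (rule P_vs)

lemma linE: "i \<in> {1,2} \<Longrightarrow> Vector_Spaces.linear smul smul (E i)"
  and linF: "i \<in> {1,2} \<Longrightarrow> Vector_Spaces.linear smul smul (F i)"
  and linK: "Vector_Spaces.linear smul smul (K a b c)"
  using P_linEF P_linK by auto

lemma lin_add: "Vector_Spaces.linear smul smul f \<Longrightarrow> f (x + y) = f x + f y"
  by (simp add: Vector_Spaces.linear_iff)
lemma lin_smul: "Vector_Spaces.linear smul smul f \<Longrightarrow> f (smul a x) = smul a (f x)"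
  by (simp add: Vector_Spaces.linear_iff)
lemma lin_additive: assumes "Vector_Spaces.linear smul smul f" shows "additive f"
  by (rule additive.intro) (rule lin_add[OF assms])
lemma lin_diff: "Vector_Spaces.linear smul smul f \<Longrightarrow> f (x - y) = f x - f y"
  by (rule additive.diff[OF lin_additive])
lemma lin_neg: "Vector_Spaces.linear smul smul f \<Longrightarrow> f (- x) = - f x"
  by (rule additive.minus[OF lin_additive])
lemma lin_0: "Vector_Spaces.linear smul smul f \<Longrightarrow> f 0 = 0"
  by (rule additive.zero[OF lin_additive])

lemma E_add: "i \<in> {1,2} \<Longrightarrow> E i (x + y) = E i x + E i y" by (rule lin_add[OF linE])
lemma E_smul: "i \<in> {1,2} \<Longrightarrow> E i (smul d x) = smul d (E i x)" by (rule lin_smul[OF linE])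
lemma E_diff: "i \<in> {1,2} \<Longrightarrow> E i (x - y) = E i x - E i y" by (rule lin_diff[OF linE])
lemma E_neg: "i \<in> {1,2} \<Longrightarrow> E i (- x) = - E i x" by (rule lin_neg[OF linE])
lemma E_0: "i \<in> {1,2} \<Longrightarrow> E i 0 = 0" by (rule lin_0[OF linE])
lemma F_add: "i \<in> {1,2} \<Longrightarrow> F i (x + y) = F i x + F i y" by (rule lin_add[OF linF])
lemma F_smul: "i \<in> {1,2} \<Longrightarrow> F i (smul d x) = smul d (F i x)" by (rule lin_smul[OF linF])
lemma F_diff: "i \<in> {1,2} \<Longrightarrow> F i (x - y) = F i x - F i y" by (rule lin_diff[OF linF])
lemma F_neg: "i \<in> {1,2} \<Longrightarrow> F i (- x) = - F i x" by (rule lin_neg[OF linF])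
lemma F_0: "i \<in> {1,2} \<Longrightarrow> F i 0 = 0" by (rule lin_0[OF linF])
lemma K_add: "K a b c (x + y) = K a b c x + K a b c y" by (rule lin_add[OF linK])
lemma K_smul: "K a b c (smul d x) = smul d (K a b c x)" by (rule lin_smul[OF linK])
lemma K_diff: "K a b c (x - y) = K a b c x - K a b c y" by (rule lin_diff[OF linK])
lemma K_neg: "K a b c (- x) = - K a b c x" by (rule lin_neg[OF linK])
lemma K_0: "K a b c 0 = 0" by (rule lin_0[OF linK])

lemma K000: "K 0 0 0 x = x" using P_K0 by simp
lemma KK: "K a b c (K d e f x) = K (a+d) (b+e) (c+f) x"
proof -
  have "K a b c \<circ> K d e f = K (a+d) (b+e) (c+f)" using P_KK by blast
  then show ?thesis by (metis comp_apply)
qed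

lemma KE0: "i \<in> {1,2} \<Longrightarrow> K a b c (E i (K (-a) (-b) (-c) w)) = smul (qp hbar (alpha i a b c)) (E i w)"
  and KF0: "i \<in> {1,2} \<Longrightarrow> K a b c (F i (K (-a) (-b) (-c) w)) = smul (qp hbar (- alpha i a b c)) (F i w)"
  using P_KE P_KF by blast+

lemma qp_add: "qp hbar (a + b) = qp hbar a * qp hbar b"
  by (simp add: qp_def distrib_left exp_add)
lemma qp_nz: "qp hbar a \<noteq> 0" by (simp add: qp_def)
lemma qp0[simp]: "qp hbar 0 = 1" by (simp add: qp_def)

lemma KF: "i \<in> {1,2} \<Longrightarrow> K a b c (F i x) = smul (qp hbar (- alpha i a b c)) (F i (K a b c x))"
  using KF0[of i a b c "K a b c x"] by (simp add: KK K000)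

lemma EK: "i \<in> {1,2} \<Longrightarrow> E i (K a b c x) = smul (qp hbar (- alpha i a b c)) (K a b c (E i x))"
proof -
  assume i: "i \<in> {1,2}"
  have "K a b c (E i x) = smul (qp hbar (alpha i a b c)) (E i (K a b c x))"
    using KE0[OF i, of a b c "K a b c x"] by (simp add: KK K000)
  hence "smul (qp hbar (- alpha i a b c)) (K a b c (E i x)) = smul (qp hbar (- alpha i a b c) * qp hbar (alpha i a b c)) (E i (K a b c x))"
    by simp
  also have "qp hbar (- alpha i a b c) * qp hbar (alpha i a b c) = 1"
    by (simp add: qp_add[symmetric])
  finally show ?thesis by simp
qed

lemma EF11: "E 1 (F 1 w) = F 1 (E 1 w) + smul (1 / kappa hbar) (K 1 (-1) 0 w - K (-1) 1 0 w)"
proof -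
  have "\<forall>w. E 1 (F 1 w) - F 1 (E 1 w) = smul (1 / kappa hbar) (K 1 (-1) 0 w - K (-1) 1 0 w)"
    using P_EF11 by blast
  then show ?thesis by (simp add: diff_eq_eq add.commute)
qed
lemma EF22: "E 2 (F 2 w) = F 2 (E 2 w) + smul (1 / kappa hbar) (K 0 1 (-1) w - K 0 (-1) 1 w)"
proof -
  have "\<forall>w. E 2 (F 2 w) - F 2 (E 2 w) = smul (1 / kappa hbar) (K 0 1 (-1) w - K 0 (-1) 1 w)"
    using P_EF22 by blast
  then show ?thesis by (simp add: diff_eq_eq add.commute)
qed
lemma EF12: "E 1 (F 2 w) = F 2 (E 1 w)"
proof -
  have "\<forall>w. E 1 (F 2 w) - F 2 (E 1 w) = 0"
    using P_EF12 by blast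
  then show ?thesis by simp
qed
lemma EF21: "E 2 (F 1 w) = F 1 (E 2 w)"
proof -
  have "\<forall>w. E 2 (F 1 w) - F 1 (E 2 w) = 0"
    using P_EF21 by blast
  then show ?thesis by simp
qed

lemma serre:
  "E 1 (E 1 (E 2 w)) - smul (qint hbar 2) (E 1 (E 2 (E 1 w))) + E 2 (E 1 (E 1 w)) = 0"
  "E 2 (E 2 (E 1 w)) - smul (qint hbar 2) (E 2 (E 1 (E 2 w))) + E 1 (E 2 (E 2 w)) = 0"
  "F 1 (F 1 (F 2 w)) - smul (qint hbar 2) (F 1 (F 2 (F 1 w))) + F 2 (F 1 (F 1 w)) = 0"
  "F 2 (F 2 (F 1 w)) - smul (qint hbar 2) (F 2 (F 1 (F 2 w))) + F 1 (F 2 (F 2 w)) = 0"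
proof -
  have "\<forall>i\<in>{1::nat,2}. \<forall>j\<in>{1,2}. i \<noteq> j \<longrightarrow> (\<forall>w.
        E i (E i (E j w)) - smul (qint hbar 2) (E i (E j (E i w))) + E j (E i (E i w)) = 0 \<and>
        F i (F i (F j w)) - smul (qint hbar 2) (F i (F j (F i w))) + F j (F i (F i w)) = 0)"
    using P_serre by blast
  then show "E 1 (E 1 (E 2 w)) - smul (qint hbar 2) (E 1 (E 2 (E 1 w))) + E 2 (E 1 (E 1 w)) = 0"
  "E 2 (E 2 (E 1 w)) - smul (qint hbar 2) (E 2 (E 1 (E 2 w))) + E 1 (E 2 (E 2 w)) = 0"
  "F 1 (F 1 (F 2 w)) - smul (qint hbar 2) (F 1 (F 2 (F 1 w))) + F 2 (F 1 (F 1 w)) = 0"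
  "F 2 (F 2 (F 1 w)) - smul (qint hbar 2) (F 2 (F 1 (F 2 w))) + F 1 (F 2 (F 2 w)) = 0"
    by auto
qed


abbreviation "EE3 \<equiv> E3op hbar smul E"
abbreviation "FF3 \<equiv> F3op hbar smul F"

lemma e3_add: "EE3 (x + y) = EE3 x + EE3 y" and e3_smul: "EE3 (smul a x) = smul a (EE3 x)"
  and f3_add: "FF3 (x + y) = FF3 x + FF3 y" and f3_smul: "FF3 (smul a x) = smul a (FF3 x)"
  by (simp_all add: E3op_def F3op_def E_add E_smul F_add F_smul vs.scale_right_diff_distrib vs.scale_right_distrib mult.commute)

lemma lin_e3: "Vector_Spaces.linear smul smul EE3" and lin_f3: "Vector_Spaces.linear smul smul FF3"
  by (simp_all add: Vector_Spaces.linear_iff e3_add e3_smul f3_add f3_smul vs.vector_space_axioms)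

lemma e3_diff: "EE3 (x - y) = EE3 x - EE3 y" by (rule lin_diff[OF lin_e3])
lemma e3_neg: "EE3 (- x) = - EE3 x" by (rule lin_neg[OF lin_e3])
lemma e3_0: "EE3 0 = 0" by (rule lin_0[OF lin_e3])
lemma f3_diff: "FF3 (x - y) = FF3 x - FF3 y" by (rule lin_diff[OF lin_f3])
lemma f3_neg: "FF3 (- x) = - FF3 x" by (rule lin_neg[OF lin_f3])
lemma f3_0: "FF3 0 = 0" by (rule lin_0[OF lin_f3])

fun act :: "letter list \<Rightarrow> 'w \<Rightarrow> 'w" where
  "act [] w = w"
| "act (LE i # u) w = E i (act u w)"
| "act (LF i # u) w = F i (act u w)"
| "act (LE3 # u) w = EE3 (act u w)"
| "act (LF3 # u) w = FF3 (act u w)"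
| "act (LK a b c # u) w = K a b c (act u w)"

declare act.simps [simp del]

definition linc :: "(complex \<times> letter list) list \<Rightarrow> 'w \<Rightarrow> 'w" where
  "linc l w = sum_list (map (\<lambda>(a,u). smul a (act u w)) l)"

lemma linc_sum: "finite U \<Longrightarrow> set (map snd l) \<subseteq> U \<Longrightarrow> linc l w = (\<Sum>u\<in>U. smul (csum l u) (act u w))"
proof (induction l)
  case Nil
  then show ?case by (simp add: linc_def csum_def)
next
  case (Cons p l)
  obtain a v where p: "p = (a,v)" by fastforce
  have v: "v \<in> U" using Cons.prems p by auto
  have "linc (p # l) w = smul a (act v w) + linc l w" by (simp add: linc_def p)
  also have "linc l w = (\<Sum>u\<in>U. smul (csum l u) (act u w))" using Cons by auto
  also have "smul a (act v w) = (\<Sum>u\<in>U. smul (if u = v then a else 0) (act u w))"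
  proof -
    have "(\<Sum>u\<in>U. smul (if u = v then a else 0) (act u w)) = (\<Sum>u\<in>U. if u = v then smul a (act u w) else 0)"
      by (rule sum.cong) auto
    also have "\<dots> = smul a (act v w)" using v Cons.prems(1) by (simp add: sum.delta)
    finally show ?thesis by simp
  qed
  also have "\<dots> + (\<Sum>u\<in>U. smul (csum l u) (act u w)) = (\<Sum>u\<in>U. smul (csum (p # l) u) (act u w))"
    by (auto simp add: sum.distrib[symmetric] vs.scale_left_distrib[symmetric] csum_def p intro!: sum.cong)
  finally show ?case .
qed

lemma linc_eq: assumes "\<forall>u\<in>set (map snd l @ map snd l'). csum l u = csum l' u"
  shows "linc l w = linc l' w"
proof -
  let ?U = "set (map snd l @ map snd l')"
  have "linc l w = (\<Sum>u\<in>?U. smul (csum l u) (act u w))" by (rule linc_sum) auto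
  moreover have "linc l' w = (\<Sum>u\<in>?U. smul (csum l' u) (act u w))" by (rule linc_sum) auto
  ultimately show ?thesis using assms by (metis (no_types, lifting) sum.cong)
qed

lemma linc_act: "act u w = linc [(1,u)] w" by (simp add: linc_def)
lemma linc_plus: "linc l w + linc l' w = linc (l @ l') w" by (simp add: linc_def)
lemma linc_uminus: "- linc l w = linc (map (\<lambda>(a,u). (-a,u)) l) w"
  by (induction l) (auto simp add: linc_def)
lemma linc_minus: "linc l w - linc l' w = linc (l @ map (\<lambda>(a,u). (-a,u)) l') w"
  by (simp only: diff_conv_add_uminus linc_uminus linc_plus)
lemma linc_smul: "smul c (linc l w) = linc (map (\<lambda>(a,u). (c*a,u)) l) w"
  by (induction l) (auto simp add: linc_def vs.scale_right_distrib)
lemma linc_zero: "0 = linc [] w" by (simp add: linc_def)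

lemma linc_op: "Vector_Spaces.linear smul smul f \<Longrightarrow> (\<And>u. f (act u w) = act (x # u) w) \<Longrightarrow>
  f (linc l w) = linc (map (\<lambda>(a,u). (a, x # u)) l) w"
  by (induction l) (auto simp add: linc_def lin_add lin_smul lin_0)

lemma linc_E: "i \<in> {1,2} \<Longrightarrow> E i (linc l w) = linc (map (\<lambda>(a,u). (a, LE i # u)) l) w"
  by (rule linc_op[OF linE]) (auto simp: act.simps)
lemma linc_F: "i \<in> {1,2} \<Longrightarrow> F i (linc l w) = linc (map (\<lambda>(a,u). (a, LF i # u)) l) w"
  by (rule linc_op[OF linF]) (auto simp: act.simps)
lemma linc_e3: "EE3 (linc l w) = linc (map (\<lambda>(a,u). (a, LE3 # u)) l) w"
  by (rule linc_op[OF lin_e3]) (auto simp: act.simps)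
lemma linc_f3: "FF3 (linc l w) = linc (map (\<lambda>(a,u). (a, LF3 # u)) l) w"
  by (rule linc_op[OF lin_f3]) (auto simp: act.simps)
lemma linc_K: "K a b c (linc l w) = linc (map (\<lambda>(d,u). (d, LK a b c # u)) l) w"
  by (rule linc_op[OF linK]) (auto simp: act.simps)

lemmas phaseB = linc_act linc_plus linc_minus linc_uminus linc_smul linc_E linc_F linc_e3 linc_f3 linc_K

end

context uqrep begin

lemma qpN: "qp hbar (numeral n) = qp hbar 1 ^ numeral n"
  by (simp add: qp_def exp_of_nat_mult[symmetric] mult.commute)
lemma qpmN: "qp hbar (- numeral n) = inverse (qp hbar 1) ^ numeral n"
  by (simp add: qp_def exp_of_nat_mult[symmetric] mult.commute exp_minus[symmetric] power_inverse)
lemma qpm1: "qp hbar (- 1) = inverse (qp hbar 1)"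
  by (simp add: qp_def exp_minus)
lemma kappa_q: "kappa hbar = qp hbar 1 - inverse (qp hbar 1)"
  by (simp add: kappa_def qpm1)
lemma q_nz: "qp hbar 1 \<noteq> 0" by (rule qp_nz)
lemma kappa_nz: "kappa hbar \<noteq> 0"
proof
  assume "kappa hbar = 0"
  hence "qp hbar 1 = inverse (qp hbar 1)" by (simp add: kappa_q)
  hence "qp hbar 1 * qp hbar 1 = 1" using q_nz by (metis right_inverse)
  thus False using q2 by (simp add: power2_eq_square)
qed
lemma qint2: "qint hbar 2 = qp hbar 1 + inverse (qp hbar 1)"
proof -
  have "qint hbar 2 = (qp hbar 1 ^ 2 - inverse (qp hbar 1) ^ 2) / kappa hbar"
    by (simp add: qint_def qpN qpmN)
  also have "qp hbar 1 ^ 2 - inverse (qp hbar 1) ^ 2 = (qp hbar 1 + inverse (qp hbar 1)) * kappa hbar"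
    by (simp add: kappa_q power2_eq_square algebra_simps)
  finally show ?thesis using kappa_nz by simp
qed

lemmas scal = qpN qpmN qpm1 qint2 alpha_def

lemmas smulA = vs.scale_right_distrib vs.scale_right_diff_distrib vs.scale_minus_right vs.scale_scale vs.scale_zero_right
   vs.scale_one vs.scale_zero_left

lemma c1: "(1::nat) \<in> {1,2}" and c2: "(2::nat) \<in> {1,2}" by auto

lemmas linA = E_add[OF c1] E_smul[OF c1] E_diff[OF c1] E_neg[OF c1] E_0[OF c1]
  E_add[OF c2] E_smul[OF c2] E_diff[OF c2] E_neg[OF c2] E_0[OF c2]
  F_add[OF c1] F_smul[OF c1] F_diff[OF c1] F_neg[OF c1] F_0[OF c1]
  F_add[OF c2] F_smul[OF c2] F_diff[OF c2] F_neg[OF c2] F_0[OF c2]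
  K_add K_smul K_diff K_neg K_0
  e3_add e3_smul e3_diff e3_neg e3_0 f3_add f3_smul f3_diff f3_neg f3_0

lemmas linB = linc_act linc_plus linc_minus linc_uminus linc_smul linc_E[OF c1] linc_E[OF c2]
  linc_F[OF c1] linc_F[OF c2] linc_e3 linc_f3 linc_K append.simps list.map prod.case

lemma F2F1: "F 2 (F 1 x) = FF3 x + smul (qp hbar 1) (F 1 (F 2 x))"
  by (simp add: F3op_def)
lemma E1E2: "E 1 (E 2 x) = EE3 x + smul (qp hbar (-1)) (E 2 (E 1 x))"
  by (simp add: E3op_def)

lemma FF3F1: "FF3 (F 1 x) = smul (qp hbar (-1)) (F 1 (FF3 x))"
proof -
  have s: "F 1 (F 1 (F 2 (act [] x))) - smul (qint hbar 2) (F 1 (F 2 (F 1 (act [] x)))) + F 2 (F 1 (F 1 (act [] x))) = 0" by (rule serre)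
  have "FF3 (F 1 (act [] x)) - smul (qp hbar (-1)) (F 1 (FF3 (act [] x))) = (F 1 (F 1 (F 2 (act [] x))) - smul (qint hbar 2) (F 1 (F 2 (F 1 (act [] x)))) + F 2 (F 1 (F 1 (act [] x))))"
    apply (simp only: F3op_def linA smulA)
    apply (simp only: linB)
    apply (rule linc_eq)
    apply ((simp add: csum_def scal field_simps q_nz kappa_nz)?; (simp_all add: kappa_q field_simps q_nz))
    done
  hence "FF3 (F 1 (act [] x)) = smul (qp hbar (-1)) (F 1 (FF3 (act [] x)))" using s by simp
  thus ?thesis by (simp add: act.simps)
qed

lemma F2FF3: "F 2 (FF3 x) = smul (qp hbar (-1)) (FF3 (F 2 x))"
proof -
  have s: "F 2 (F 2 (F 1 (act [] x))) - smul (qint hbar 2) (F 2 (F 1 (F 2 (act [] x)))) + F 1 (F 2 (F 2 (act [] x))) = 0" by (rule serre)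
  have "F 2 (FF3 (act [] x)) - smul (qp hbar (-1)) (FF3 (F 2 (act [] x))) = (F 2 (F 2 (F 1 (act [] x))) - smul (qint hbar 2) (F 2 (F 1 (F 2 (act [] x)))) + F 1 (F 2 (F 2 (act [] x))))"
    apply (simp only: F3op_def linA smulA)
    apply (simp only: linB)
    apply (rule linc_eq)
    apply ((simp add: csum_def scal field_simps q_nz kappa_nz)?; (simp_all add: kappa_q field_simps q_nz))
    done
  hence "F 2 (FF3 (act [] x)) = smul (qp hbar (-1)) (FF3 (F 2 (act [] x)))" using s by simp
  thus ?thesis by (simp add: act.simps)
qed

lemma E1EE3: "E 1 (EE3 x) = smul (qp hbar 1) (EE3 (E 1 x))"
proof -
  have s: "E 1 (E 1 (E 2 (act [] x))) - smul (qint hbar 2) (E 1 (E 2 (E 1 (act [] x)))) + E 2 (E 1 (E 1 (act [] x))) = 0" by (rule serre)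
  have "E 1 (EE3 (act [] x)) - smul (qp hbar 1) (EE3 (E 1 (act [] x))) = (E 1 (E 1 (E 2 (act [] x))) - smul (qint hbar 2) (E 1 (E 2 (E 1 (act [] x)))) + E 2 (E 1 (E 1 (act [] x))))"
    apply (simp only: E3op_def linA smulA)
    apply (simp only: linB)
    apply (rule linc_eq)
    apply ((simp add: csum_def scal field_simps q_nz kappa_nz)?; (simp_all add: kappa_q field_simps q_nz))
    done
  hence "E 1 (EE3 (act [] x)) = smul (qp hbar 1) (EE3 (E 1 (act [] x)))" using s by simp
  thus ?thesis by (simp add: act.simps)
qed

lemma EE3E2: "EE3 (E 2 x) = smul (qp hbar 1) (E 2 (EE3 x))"
proof -
  have s: "E 2 (E 2 (E 1 (act [] x))) - smul (qint hbar 2) (E 2 (E 1 (E 2 (act [] x)))) + E 1 (E 2 (E 2 (act [] x))) = 0" by (rule serre)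
  have "EE3 (E 2 (act [] x)) - smul (qp hbar 1) (E 2 (EE3 (act [] x))) = (E 2 (E 2 (E 1 (act [] x))) - smul (qint hbar 2) (E 2 (E 1 (E 2 (act [] x)))) + E 1 (E 2 (E 2 (act [] x))))"
    apply (simp only: E3op_def linA smulA)
    apply (simp only: linB)
    apply (rule linc_eq)
    apply ((simp add: csum_def scal field_simps q_nz kappa_nz)?; (simp_all add: kappa_q field_simps q_nz))
    done
  hence "EE3 (E 2 (act [] x)) = smul (qp hbar 1) (E 2 (EE3 (act [] x)))" using s by simp
  thus ?thesis by (simp add: act.simps)
qed

lemma qp_split: "qp hbar (-a - b) = qp hbar (-a) * qp hbar (-b)"
  by (simp add: qp_add[symmetric])

lemmas KFi = KF[OF c1] KF[OF c2]
lemmas EKi = EK[OF c1] EK[OF c2]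

lemma Kf3: "K a b c (FF3 x) = smul (qp hbar (-(alpha 1 a b c + alpha 2 a b c))) (FF3 (K a b c x))"
  by (simp add: F3op_def KFi linA smulA qp_split mult_ac)
lemma e3K: "EE3 (K a b c x) = smul (qp hbar (-(alpha 1 a b c + alpha 2 a b c))) (K a b c (EE3 x))"
  by (simp add: E3op_def EKi linA smulA qp_split mult_ac)

lemmas baseA = EF11 EF22 EF12 EF21 KFi EKi KK K000

lemma E1FF3: "E 1 (FF3 x) = FF3 (E 1 x) - smul (qp hbar 1) (F 2 (K 1 (-1) 0 x))"
proof -
  have "E 1 (FF3 (act [] x)) = FF3 (E 1 (act [] x)) - smul (qp hbar 1) (F 2 (K 1 (-1) 0 (act [] x)))"
    apply (simp add: E3op_def F3op_def baseA linA smulA alpha_def)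
    apply (simp only: linB)
    apply (rule linc_eq)
    apply ((simp add: csum_def scal field_simps q_nz kappa_nz)?; (simp_all add: kappa_q field_simps q_nz))
    done
  thus ?thesis by (simp add: act.simps)
qed

lemma E2FF3: "E 2 (FF3 x) = FF3 (E 2 x) + F 1 (K 0 (-1) 1 x)"
proof -
  have "E 2 (FF3 (act [] x)) = FF3 (E 2 (act [] x)) + F 1 (K 0 (-1) 1 (act [] x))"
    apply (simp add: E3op_def F3op_def baseA linA smulA alpha_def)
    apply (simp only: linB)
    apply (rule linc_eq)
    apply ((simp add: csum_def scal field_simps q_nz kappa_nz)?; (simp_all add: kappa_q field_simps q_nz))
    done
  thus ?thesis by (simp add: act.simps)
qed

lemma EE3F1: "EE3 (F 1 x) = F 1 (EE3 x) - smul (qp hbar (-1)) (K (-1) 1 0 (E 2 x))"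
proof -
  have "EE3 (F 1 (act [] x)) = F 1 (EE3 (act [] x)) - smul (qp hbar (-1)) (K (-1) 1 0 (E 2 (act [] x)))"
    apply (simp add: E3op_def F3op_def baseA linA smulA alpha_def)
    apply (simp only: linB)
    apply (rule linc_eq)
    apply ((simp add: csum_def scal field_simps q_nz kappa_nz)?; (simp_all add: kappa_q field_simps q_nz))
    done
  thus ?thesis by (simp add: act.simps)
qed

lemma EE3F2: "EE3 (F 2 x) = F 2 (EE3 x) + K 0 1 (-1) (E 1 x)"
proof -
  have "EE3 (F 2 (act [] x)) = F 2 (EE3 (act [] x)) + K 0 1 (-1) (E 1 (act [] x))"
    apply (simp add: E3op_def F3op_def baseA linA smulA alpha_def)
    apply (simp only: linB)
    apply (rule linc_eq)
    apply ((simp add: csum_def scal field_simps q_nz kappa_nz)?; (simp_all add: kappa_q field_simps q_nz))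
    done
  thus ?thesis by (simp add: act.simps)
qed

lemma EE3FF3: "EE3 (FF3 x) = FF3 (EE3 x) + smul (1 / kappa hbar) (K 1 0 (-1) x - K (-1) 0 1 x)"
proof -
  have "EE3 (FF3 (act [] x)) = FF3 (EE3 (act [] x)) + smul (1 / kappa hbar) (K 1 0 (-1) (act [] x) - K (-1) 0 1 (act [] x))"
    apply (simp add: E3op_def F3op_def baseA linA smulA alpha_def)
    apply (simp only: linB)
    apply (rule linc_eq)
    apply ((simp add: csum_def scal field_simps q_nz kappa_nz)?; (simp_all add: kappa_q field_simps q_nz))
    done
  thus ?thesis by (simp add: act.simps)
qed

end

context uqrep begin

lemmas nfA = F2F1 FF3F1 F2FF3 E1E2 E1EE3 EE3E2 EF11 EF22 EF12 EF21 E1FF3 E2FF3 EE3F1 EE3F2 EE3FF3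
  KFi EKi Kf3 e3K KK K000

abbreviation "CC1 \<equiv> C1op hbar smul E F K"
abbreviation "CC2 \<equiv> C2op hbar smul E F K"

lemma C1F1: "CC1 (F 1 x) = F 1 (CC1 x)"
proof -
  have "CC1 (F 1 (act [] x)) = F 1 (CC1 (act [] x))"
    apply (simp add: C1op_def Let_def Kc_def nfA linA smulA alpha_def)
    apply (simp only: linB)
    apply (rule linc_eq)
    apply ((simp add: csum_def scal field_simps q_nz kappa_nz)?; (simp_all add: kappa_q field_simps q_nz)?; ((intro conjI)?; algebra))
    done
  thus ?thesis by (simp add: act.simps)
qed

lemma C1F2: "CC1 (F 2 x) = F 2 (CC1 x)"
proof -
  have "CC1 (F 2 (act [] x)) = F 2 (CC1 (act [] x))"
    apply (simp add: C1op_def Let_def Kc_def nfA linA smulA alpha_def)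
    apply (simp only: linB)
    apply (rule linc_eq)
    apply ((simp add: csum_def scal field_simps q_nz kappa_nz)?; (simp_all add: kappa_q field_simps q_nz)?; ((intro conjI)?; algebra))
    done
  thus ?thesis by (simp add: act.simps)
qed

lemma C1E1: "CC1 (E 1 x) = E 1 (CC1 x)"
proof -
  have "CC1 (E 1 (act [] x)) = E 1 (CC1 (act [] x))"
    apply (simp add: C1op_def Let_def Kc_def nfA linA smulA alpha_def)
    apply (simp only: linB)
    apply (rule linc_eq)
    apply ((simp add: csum_def scal field_simps q_nz kappa_nz)?; (simp_all add: kappa_q field_simps q_nz)?; ((intro conjI)?; algebra))
    done
  thus ?thesis by (simp add: act.simps)
qed

lemma C1E2: "CC1 (E 2 x) = E 2 (CC1 x)"
proof -
  have "CC1 (E 2 (act [] x)) = E 2 (CC1 (act [] x))"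
    apply (simp add: C1op_def Let_def Kc_def nfA linA smulA alpha_def)
    apply (simp only: linB)
    apply (rule linc_eq)
    apply ((simp add: csum_def scal field_simps q_nz kappa_nz)?; (simp_all add: kappa_q field_simps q_nz)?; ((intro conjI)?; algebra))
    done
  thus ?thesis by (simp add: act.simps)
qed

lemma C2F1: "CC2 (F 1 x) = F 1 (CC2 x)"
proof -
  have "CC2 (F 1 (act [] x)) = F 1 (CC2 (act [] x))"
    apply (simp add: C2op_def Let_def Kc_def nfA linA smulA alpha_def)
    apply (simp only: linB)
    apply (rule linc_eq)
    apply ((simp add: csum_def scal field_simps q_nz kappa_nz)?; (simp_all add: kappa_q field_simps q_nz)?; ((intro conjI)?; algebra))
    done
  thus ?thesis by (simp add: act.simps)
qed

lemma C2F2: "CC2 (F 2 x) = F 2 (CC2 x)"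
proof -
  have "CC2 (F 2 (act [] x)) = F 2 (CC2 (act [] x))"
    apply (simp add: C2op_def Let_def Kc_def nfA linA smulA alpha_def)
    apply (simp only: linB)
    apply (rule linc_eq)
    apply ((simp add: csum_def scal field_simps q_nz kappa_nz)?; (simp_all add: kappa_q field_simps q_nz)?; ((intro conjI)?; algebra))
    done
  thus ?thesis by (simp add: act.simps)
qed

lemma C2E1: "CC2 (E 1 x) = E 1 (CC2 x)"
proof -
  have "CC2 (E 1 (act [] x)) = E 1 (CC2 (act [] x))"
    apply (simp add: C2op_def Let_def Kc_def nfA linA smulA alpha_def)
    apply (simp only: linB)
    apply (rule linc_eq)
    apply ((simp add: csum_def scal field_simps q_nz kappa_nz)?; (simp_all add: kappa_q field_simps q_nz)?; ((intro conjI)?; algebra))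
    done
  thus ?thesis by (simp add: act.simps)
qed

lemma C2E2: "CC2 (E 2 x) = E 2 (CC2 x)"
proof -
  have "CC2 (E 2 (act [] x)) = E 2 (CC2 (act [] x))"
    apply (simp add: C2op_def Let_def Kc_def nfA linA smulA alpha_def)
    apply (simp only: linB)
    apply (rule linc_eq)
    apply ((simp add: csum_def scal field_simps q_nz kappa_nz)?; (simp_all add: kappa_q field_simps q_nz)?; ((intro conjI)?; algebra))
    done
  thus ?thesis by (simp add: act.simps)
qed

lemma C1K: "CC1 (K a b c x) = K a b c (CC1 x)"
proof -
  have qq: "qp hbar (b - a) * qp hbar (c - b) = qp hbar (c - a)" by (simp add: qp_add[symmetric])
  show ?thesis
    by (simp add: C1op_def Let_def Kc_def nfA linA smulA alpha_def add_ac qq)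
qed

lemma C2K: "CC2 (K a b c x) = K a b c (CC2 x)"
proof -
  have qq: "qp hbar (b - a) * qp hbar (c - b) = qp hbar (c - a)" by (simp add: qp_add[symmetric])
  show ?thesis
    by (simp add: C2op_def Let_def Kc_def nfA linA smulA alpha_def add_ac qq)
qed

end

declare One_nat_def [simp]

lemma geo_fps: "Abs_fps (\<lambda>n. r^(n+1)) * (1 - fps_const r * fps_X) = fps_const (r::complex)"
proof -
  have "Abs_fps (\<lambda>n. r^(n+1)) * (1 - fps_const r * fps_X) =
        Abs_fps (\<lambda>n. r^(n+1)) - fps_const r * (fps_X * Abs_fps (\<lambda>n. r^(n+1)))"
    by (simp add: algebra_simps)
  also have "\<dots> = fps_const r"
    by (auto simp: fps_eq_iff elim: less_natE)
  finally show ?thesis .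
qed

lemma neglog_roots:
  fixes a b c :: complex
  shows "neglog_series (a+b+c) (-(a*b+a*c+b*c)) (a*b*c) =
     Abs_fps (\<lambda>n. if n = 0 then 0 else (a^n+b^n+c^n) / of_nat n)"
proof -
  define g where "g = - (fps_const (a+b+c) * fps_X + fps_const (-(a*b+a*c+b*c)) * fps_X^2 + fps_const (a*b*c) * fps_X^3)"
  define N where "N = neglog_series (a+b+c) (-(a*b+a*c+b*c)) (a*b*c)"
  define T where "T = Abs_fps (\<lambda>n. if n = 0 then 0 else (a^n+b^n+c^n) / (of_nat n :: complex))"
  define A where "A r = Abs_fps (\<lambda>n. (r::complex)^(n+1))" for r
  have g0: "fps_nth g 0 = 0" by (simp add: g_def)
  have P: "1 + g = (1 - fps_const a * fps_X) * (1 - fps_const b * fps_X) * (1 - fps_const c * fps_X)"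
    unfolding g_def by (simp only: fps_const_add[symmetric] fps_const_mult[symmetric] fps_const_neg[symmetric] fps_const_sub[symmetric] power2_eq_square power3_eq_cube) algebra
  have P0: "fps_nth (1 + g) 0 \<noteq> 0" using g0 by simp
  have N_eq: "N = - (fps_ln 1 oo g)" by (simp add: N_def neglog_series_def g_def)
  have dN: "fps_deriv N = - (inverse (1 + g) * fps_deriv g)"
  proof -
    have "fps_deriv N = - ((fps_deriv (fps_ln 1) oo g) * fps_deriv g)"
      by (simp add: N_eq fps_compose_deriv[OF g0])
    also have "fps_deriv (fps_ln 1) = inverse (1 + fps_X)" by (simp add: fps_ln_deriv)
    also have "inverse (1 + fps_X) oo g = inverse ((1 + fps_X) oo g)"
      by (rule fps_inverse_compose[OF g0]) simp
    also have "(1 + fps_X) oo g = 1 + g" by (simp add: fps_compose_add_distrib g0)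
    finally show ?thesis .
  qed
  have dT: "fps_deriv T = A a + A b + A c"
    by (simp add: T_def A_def fps_eq_iff del: of_nat_Suc)
  have dg: "- fps_deriv g = fps_const (a+b+c) - 2 * fps_const (a*b+a*c+b*c) * fps_X + 3 * fps_const (a*b*c) * fps_X^2"
    unfolding g_def
    apply (simp del: fps_const_add fps_const_mult fps_const_neg fps_const_sub add: fps_deriv_power)
    apply (simp only: fps_const_add[symmetric] fps_const_mult[symmetric] fps_const_neg[symmetric] fps_const_sub[symmetric] fps_numeral_fps_const[symmetric])
    apply algebra
    done
  have "fps_deriv T * (1 + g) =
      (A a * (1 - fps_const a * fps_X)) * (1 - fps_const b * fps_X) * (1 - fps_const c * fps_X)
    + (A b * (1 - fps_const b * fps_X)) * (1 - fps_const a * fps_X) * (1 - fps_const c * fps_X)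
    + (A c * (1 - fps_const c * fps_X)) * (1 - fps_const a * fps_X) * (1 - fps_const b * fps_X)"
    unfolding dT P by algebra
  also have "\<dots> = fps_const a * (1 - fps_const b * fps_X) * (1 - fps_const c * fps_X)
    + fps_const b * (1 - fps_const a * fps_X) * (1 - fps_const c * fps_X)
    + fps_const c * (1 - fps_const a * fps_X) * (1 - fps_const b * fps_X)"
    by (simp only: A_def geo_fps)
  also have "\<dots> = - fps_deriv g"
    unfolding dg by (simp only: fps_const_add[symmetric] fps_const_mult[symmetric] fps_const_neg[symmetric] fps_const_sub[symmetric] power2_eq_square) algebra
  finally have T1: "fps_deriv T * (1 + g) = - fps_deriv g" .
  have N1: "fps_deriv N * (1 + g) = - fps_deriv g"
    unfolding dN using inverse_mult_eq_1[OF P0] by (simp add: algebra_simps)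
  have "1 + g \<noteq> 0" using P0 by (metis fps_zero_nth)
  hence "fps_deriv N = fps_deriv T" using T1 N1 by (metis mult_right_cancel)
  hence "N = fps_const (fps_nth N 0 - fps_nth T 0) + T" by (simp add: fps_deriv_eq_iff)
  moreover have "fps_nth N 0 = 0" by (simp add: N_eq)
  moreover have "fps_nth T 0 = 0" by (simp add: T_def)
  ultimately have "N = T" by simp
  thus ?thesis by (simp add: N_def T_def)
qed

declare One_nat_def [simp del]

lemma qp_pow: "qp hbar (x * of_nat k) = qp hbar x ^ k"
  by (simp add: qp_def exp_of_nat_mult[symmetric] mult.commute mult.left_commute)

context uqrep begin

lemma CC1_add: "CC1 (x + y) = CC1 x + CC1 y"
  by (simp add: C1op_def Let_def Kc_def linA smulA algebra_simps)
lemma CC2_add: "CC2 (x + y) = CC2 x + CC2 y"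
  by (simp add: C2op_def Let_def Kc_def linA smulA algebra_simps)
lemma CC1_smul: "CC1 (smul d x) = smul d (CC1 x)"
  by (simp add: C1op_def Let_def Kc_def linA smulA algebra_simps mult_ac)
lemma CC2_smul: "CC2 (smul d x) = smul d (CC2 x)"
  by (simp add: C2op_def Let_def Kc_def linA smulA algebra_simps mult_ac)

lemma C3F: "i \<in> {1,2} \<Longrightarrow> C3op K (F i x) = F i (C3op K x)"
  by (auto simp: C3op_def KF alpha_def)
lemma C3E: "i \<in> {1,2} \<Longrightarrow> C3op K (E i x) = E i (C3op K x)"
  by (auto simp: C3op_def EK alpha_def)
lemma C3K: "C3op K (K a b c x) = K a b c (C3op K x)"
  by (simp add: C3op_def KK add.commute)

lemma scalar_all:
  fixes v0 :: 'w and c1 c2 c3 :: complex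
  assumes gen: "generated_by smul E F K v0"
    and v1: "CC1 v0 = smul c1 v0" and v2: "CC2 v0 = smul c2 v0" and v3: "C3op K v0 = smul c3 v0"
  shows "(\<forall>w. CC1 w = smul c1 w) \<and> (\<forall>w. CC2 w = smul c2 w) \<and> (\<forall>w. C3op K w = smul c3 w)"
proof -
  define S where "S = {w. CC1 w = smul c1 w \<and> CC2 w = smul c2 w \<and> C3op K w = smul c3 w}"
  have sub: "vs.subspace S"
    unfolding vs.subspace_def S_def
    by (auto simp: CC1_add CC2_add CC1_smul CC2_smul C3op_def K_add K_smul K_0
       vs.scale_right_distrib mult.commute
       CC1_smul[of 0 0, simplified] CC2_smul[of 0 0, simplified])
  have inv: "\<forall>i\<in>{1,2}. E i ` S \<subseteq> S \<and> F i ` S \<subseteq> S"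
  proof (intro ballI conjI)
    fix i :: nat assume i: "i \<in> {1,2}"
    show "E i ` S \<subseteq> S"
    proof
      fix y assume "y \<in> E i ` S"
      then obtain w where w: "w \<in> S" "y = E i w" by auto
      have "i = 1 \<or> i = 2" using i by auto
      then show "y \<in> S" using w i
        by (auto simp: S_def C1E1 C1E2 C2E1 C2E2 C3E E_smul)
    qed
    show "F i ` S \<subseteq> S"
    proof
      fix y assume "y \<in> F i ` S"
      then obtain w where w: "w \<in> S" "y = F i w" by auto
      have "i = 1 \<or> i = 2" using i by auto
      then show "y \<in> S" using w i
        by (auto simp: S_def C1F1 C1F2 C2F1 C2F2 C3F F_smul)
    qed
  qed
  have invK: "\<forall>x1 x2 x3. K x1 x2 x3 ` S \<subseteq> S"
    by (auto simp: S_def C1K C2K C3K K_smul)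
  have "v0 \<in> S" using v1 v2 v3 by (simp add: S_def)
  hence "S = UNIV" using gen sub inv invK unfolding generated_by_def by blast
  thus ?thesis by (auto simp: S_def)
qed

lemma Kv0:
  assumes wt1: "\<forall>nu. K nu 0 0 v0 = smul (qp hbar (nu * l1)) v0"
    and wt2: "\<forall>nu. K 0 nu 0 v0 = smul (qp hbar (nu * l2)) v0"
    and wt3: "\<forall>nu. K 0 0 nu v0 = smul (qp hbar (nu * l3)) v0"
  shows "K x1 x2 x3 v0 = smul (qp hbar (x1 * l1) * qp hbar (x2 * l2) * qp hbar (x3 * l3)) v0"
proof -
  have "K x1 x2 x3 v0 = K x1 0 0 (K 0 x2 0 (K 0 0 x3 v0))" by (simp add: KK)
  also have "\<dots> = smul (qp hbar (x1 * l1) * qp hbar (x2 * l2) * qp hbar (x3 * l3)) v0"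
    using wt1 wt2 wt3 by (simp add: K_smul mult_ac)
  finally show ?thesis .
qed

end

theorem mainTheorem3:
  fixes hbar :: complex and smul :: "complex \<Rightarrow> 'w::ab_group_add \<Rightarrow> 'w"
    and E F :: "nat \<Rightarrow> 'w \<Rightarrow> 'w" and K :: "complex \<Rightarrow> complex \<Rightarrow> complex \<Rightarrow> 'w \<Rightarrow> 'w"
    and v0 :: 'w and l1 l2 l3 :: complex
  assumes q2: "qp hbar 1 ^ 2 \<noteq> 1"
    and rep: "is_Uq_gl3_rep hbar smul E F K"
    and gen: "generated_by smul E F K v0"
    and wt1: "\<forall>nu. K nu 0 0 v0 = smul (qp hbar (nu * l1)) v0"
    and wt2: "\<forall>nu. K 0 nu 0 v0 = smul (qp hbar (nu * l2)) v0"
    and wt3: "\<forall>nu. K 0 0 nu v0 = smul (qp hbar (nu * l3)) v0"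
    and hw: "E 1 v0 = 0" "E 2 v0 = 0"
  shows "\<exists>c1 c2 c3.
     (\<forall>w. C1op hbar smul E F K w = smul c1 w) \<and>
     (\<forall>w. C2op hbar smul E F K w = smul c2 w) \<and>
     (\<forall>w. C3op K w = smul c3 w) \<and>
     [:1, - c1, - c2, - c3:] =
       [:1, - qp hbar (-2 * (l1 + 1)):] * [:1, - qp hbar (-2 * l2):] * [:1, - qp hbar (-2 * (l3 - 1)):] \<and>
     ((\<forall>k::nat. k \<ge> 1 \<longrightarrow> qp hbar (2 * of_nat k) + 1 + qp hbar (- 2 * of_nat k) \<noteq> 0) \<longrightarrow>
       (\<forall>k::nat. k \<ge> 1 \<longrightarrow>
          Fk c1 c2 c3 k = qp hbar (-2 * (l1 + 1) * of_nat k) + qp hbar (-2 * l2 * of_nat k)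
                          + qp hbar (-2 * (l3 - 1) * of_nat k)) \<and>
       Fseries hbar c1 c2 c3 =
          fps_scale (qp hbar (-2 * (l1 + 1))) (f3 hbar) + fps_scale (qp hbar (-2 * l2)) (f3 hbar)
          + fps_scale (qp hbar (-2 * (l3 - 1))) (f3 hbar))"
proof -
  interpret U: uqrep hbar smul E F K using rep q2 by (unfold_locales)
  define a where "a = qp hbar (-2 * (l1 + 1))"
  define b where "b = qp hbar (-2 * l2)"
  define c where "c = qp hbar (-2 * (l3 - 1))"
  define c1 where "c1 = a + b + c"
  define c2 where "c2 = -(a*b + a*c + b*c)"
  define c3 where "c3 = a*b*c"
  have Kv: "K x1 x2 x3 v0 = smul (qp hbar (x1 * l1) * qp hbar (x2 * l2) * qp hbar (x3 * l3)) v0" for x1 x2 x3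
    by (rule U.Kv0[OF wt1 wt2 wt3])
  have hw3: "E3op hbar smul E v0 = 0" by (simp add: E3op_def hw U.E_0)
  have e1: "E 1 (K x1 x2 x3 v0) = 0" for x1 x2 x3 by (simp add: Kv U.E_smul hw)
  have e2: "E 2 (K x1 x2 x3 v0) = 0" for x1 x2 x3 by (simp add: Kv U.E_smul hw)
  have e3: "E3op hbar smul E (K x1 x2 x3 v0) = 0" for x1 x2 x3 by (simp add: Kv U.e3_smul hw3)
  have sc: "qp hbar x * qp hbar y = qp hbar (x + y)" for x y by (simp add: U.qp_add)
  have v1: "C1op hbar smul E F K v0 = smul c1 v0"
    apply (simp add: C1op_def Let_def Kc_def Kv U.linA hw hw3)
    apply (simp add: Kv c1_def a_def b_def c_def U.vs.scale_left_distrib sc algebra_simps)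
    done
  have v2: "C2op hbar smul E F K v0 = smul c2 v0"
    apply (simp add: C2op_def Let_def Kc_def Kv U.linA hw hw3)
    apply (simp add: Kv c2_def a_def b_def c_def U.vs.scale_left_distrib sc algebra_simps)
    apply (rule disjI1)
    apply (rule arg_cong[of _ _ "qp hbar"])
    apply algebra
    done
  have v3: "C3op K v0 = smul c3 v0"
    apply (simp add: C3op_def Kv c3_def a_def b_def c_def sc algebra_simps)
    apply (rule disjI1)
    apply (rule arg_cong[of _ _ "qp hbar"])
    apply algebra
    done
  have all: "(\<forall>w. C1op hbar smul E F K w = smul c1 w) \<and> (\<forall>w. C2op hbar smul E F K w = smul c2 w) \<and>
     (\<forall>w. C3op K w = smul c3 w)"
    by (rule U.scalar_all[OF gen v1 v2 v3])
  have poly: "[:1, - c1, - c2, - c3:] =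
       [:1, - qp hbar (-2 * (l1 + 1)):] * [:1, - qp hbar (-2 * l2):] * [:1, - qp hbar (-2 * (l3 - 1)):]"
    unfolding a_def[symmetric] b_def[symmetric] c_def[symmetric] c1_def c2_def c3_def
    by (simp add: algebra_simps)
  have NL: "neglog_series c1 c2 c3 = Abs_fps (\<lambda>n. if n = 0 then 0 else (a^n+b^n+c^n) / of_nat n)"
    unfolding c1_def c2_def c3_def by (rule neglog_roots)
  have FK: "Fk c1 c2 c3 k = a^k + b^k + c^k" if "k \<ge> 1" for k
    using that by (simp add: Fk_def NL)
  have FK2: "\<forall>k::nat. k \<ge> 1 \<longrightarrow>
          Fk c1 c2 c3 k = qp hbar (-2 * (l1 + 1) * of_nat k) + qp hbar (-2 * l2 * of_nat k)
                          + qp hbar (-2 * (l3 - 1) * of_nat k)"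
  proof (intro allI impI)
    fix k :: nat assume k: "k \<ge> 1"
    show "Fk c1 c2 c3 k = qp hbar (-2 * (l1 + 1) * of_nat k) + qp hbar (-2 * l2 * of_nat k)
                          + qp hbar (-2 * (l3 - 1) * of_nat k)"
      unfolding qp_pow using FK[OF k] by (simp only: a_def b_def c_def)
  qed
  have FS: "Fseries hbar c1 c2 c3 =
          fps_scale (qp hbar (-2 * (l1 + 1))) (f3 hbar) + fps_scale (qp hbar (-2 * l2)) (f3 hbar)
          + fps_scale (qp hbar (-2 * (l3 - 1))) (f3 hbar)"
    unfolding a_def[symmetric] b_def[symmetric] c_def[symmetric] fps_scale_def fps_compose_linear
    by (auto simp: fps_eq_iff Fseries_def f3_def FK divide_inverse algebra_simps)
  show ?thesis using all poly FK2 FS by blast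
qed

end
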